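(* Let $X\subset\operatorname{Hol}(\mathbb{D})$ be a Banach space such that (X1) for each $w\in\mathbb{D}$ the map $f\mapsto f(w)$, $X\to\mathbb{C}$, is continuous; (X2) $X$ contains the polynomials and they are dense in $X$; (X3) if $f\in X$ then $zf\in X$. Let $Y\subset X$ be a set such that (Y1) if $g\in X$ and $0<\inf_{\mathbb{D}}|g|\le\sup_{\mathbb{D}}|g|<\infty$, then $g\in Y$; (Y2) for every $\lambda\in\mathbb{T}$, the function $g(z):=z-\lambda$ belongs to $Y$. Let $T:X\to\operatorname{Hol}(\mathbb{D})$ be a continuous linear map such that $(Tg)(z)\neq0$ for all $g\in Y$ and all $z\in\mathbb{D}$. Then there exist holomorphic functions $\phi:\mathbb{D}\to\mathbb{D}$ and $\psi:\mathbb{D}\to\mathbb{C}\setminus\{0\}$ such that \[ Tf=\psi\cdot(f\circ\phi)\qquad(f\in X). \]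
   Context: $\mathbb{D}$ is the open unit disk, $\mathbb{T}$ the unit circle, and $\operatorname{Hol}(\mathbb{D})$ the space of holomorphic functions on $\mathbb{D}$, endowed with its usual Fréchet-space topology (uniform convergence on compact subsets of $\mathbb{D}$); continuity of $T$ refers to the norm topology on $X$ and this topology on $\operatorname{Hol}(\mathbb{D})$. *)

theory Defs
  imports "HOL-Analysis.Analysis" "HOL-Computational_Algebra.Polynomial"
begin

text \<open>Elements of Hol(D) are represented canonically by functions complex => complex that
are holomorphic on the open unit disk and vanish outside it.\<close>

definition hol_disk :: "(complex \<Rightarrow> complex) set" where
  "hol_disk = {f. f holomorphic_on ball 0 1 \<and> (\<forall>z. z \<notin> ball 0 1 \<longrightarrow> f z = 0)}"

definition restrD :: "(complex \<Rightarrow> complex) \<Rightarrow> complex \<Rightarrow> complex" where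
  "restrD f = (\<lambda>z. if z \<in> ball 0 1 then f z else 0)"

definition banach_subspace_hol :: "(complex \<Rightarrow> complex) set \<Rightarrow> ((complex \<Rightarrow> complex) \<Rightarrow> real) \<Rightarrow> bool" where
  "banach_subspace_hol X N \<longleftrightarrow>
     X \<subseteq> hol_disk \<and>
     (\<lambda>z. 0) \<in> X \<and>
     (\<forall>f\<in>X. \<forall>g\<in>X. (\<lambda>z. f z + g z) \<in> X) \<and>
     (\<forall>f\<in>X. \<forall>c::complex. (\<lambda>z. c * f z) \<in> X) \<and>
     (\<forall>f\<in>X. N f \<ge> 0) \<and>
     (\<forall>f\<in>X. N f = 0 \<longleftrightarrow> f = (\<lambda>z. 0)) \<and>
     (\<forall>f\<in>X. \<forall>g\<in>X. N (\<lambda>z. f z + g z) \<le> N f + N g) \<and>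
     (\<forall>f\<in>X. \<forall>c::complex. N (\<lambda>z. c * f z) = cmod c * N f) \<and>
     (\<forall>s::nat \<Rightarrow> complex \<Rightarrow> complex. (\<forall>n. s n \<in> X) \<longrightarrow>
        (\<forall>e>0. \<exists>M. \<forall>m\<ge>M. \<forall>n\<ge>M. N (\<lambda>z. s m z - s n z) < e) \<longrightarrow>
        (\<exists>f\<in>X. (\<lambda>n. N (\<lambda>z. s n z - f z)) \<longlonglongrightarrow> 0))"

end

theory Submission
  imports Defs "HOL-Complex_Analysis.Complex_Analysis"
begin

lemma entire_exp_lin:
  fixes F :: "complex \<Rightarrow> complex"
  assumes holF: "F holomorphic_on UNIV" and F0: "F 0 = 1"
    and nz: "\<And>x. F x \<noteq> 0" and ub: "\<And>x. cmod (F x) \<le> exp (cmod x)"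
  shows "\<exists>b. \<forall>x. F x = exp (b * x)"
proof -
  obtain g0 where holg0: "g0 holomorphic_on UNIV" and eg0': "\<And>z. z \<in> UNIV \<Longrightarrow> F z = exp (g0 z)"
    by (rule contractible_imp_holomorphic_log[OF holF contractible_UNIV]) (use nz in auto)
  have eg0: "F z = exp (g0 z)" for z using eg0' by simp
  define g where "g = (\<lambda>z. g0 z - g0 0)"
  have holg: "g holomorphic_on UNIV" unfolding g_def by (intro holomorphic_intros holg0)
  have g0z: "g 0 = 0" by (simp add: g_def)
  have eg: "F z = exp (g z)" for z
    using eg0[of z] eg0[of 0] F0 by (simp add: g_def exp_diff)
  have reg: "Re (g z) \<le> cmod z" for z
    using ub[of z] by (simp add: eg)
  have gb: "cmod (g z) \<le> 4 * cmod z" for z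
  proof (cases "z = 0")
    case True thus ?thesis by (simp add: g0z)
  next
    case False
    define R where "R = 2 * cmod z"
    have R: "R > 0" using False by (simp add: R_def)
    define \<phi> where "\<phi> = (\<lambda>u. g (of_real R * u) / (2 * R - g (of_real R * u)))"
    have reR: "Re (g (of_real R * u)) < R" if "cmod u < 1" for u
    proof -
      have "Re (g (of_real R * u)) \<le> cmod (of_real R * u)" by (rule reg)
      also have "\<dots> = R * cmod u" using R by (simp add: norm_mult)
      also have "\<dots> < R" using R that by simp
      finally show ?thesis .
    qed
    have den: "2 * of_real R - g (of_real R * u) \<noteq> 0" if "cmod u < 1" for u
    proof
      assume "2 * of_real R - g (of_real R * u) = 0"
      hence "g (of_real R * u) = 2 * of_real R" by simp
      hence "Re (g (of_real R * u)) = 2 * R" by simp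
      with reR[OF that] R show False by simp
    qed
    have hol1: "(\<lambda>u. g (of_real R * u)) holomorphic_on ball 0 1"
      using holomorphic_on_compose[of "\<lambda>u. of_real R * u" "ball 0 1" g] holomorphic_on_subset[OF holg]
      by (auto simp: o_def intro!: holomorphic_intros)
    have hol\<phi>: "\<phi> holomorphic_on ball 0 1"
      unfolding \<phi>_def using den by (intro holomorphic_intros hol1) auto
    have \<phi>0: "\<phi> 0 = 0" by (simp add: \<phi>_def g0z)
    have lt1: "cmod (\<phi> u) < 1" if u: "cmod u < 1" for u
    proof -
      define a where "a = g (of_real R * u)"
      have ra: "Re a < R" using reR[OF u] by (simp add: a_def)
      have d: "2 * of_real R - a \<noteq> 0" using den[OF u] by (simp add: a_def)
      have e1: "(2*R - Re a)^2 - (Re a)^2 = 4*R*(R - Re a)" by (simp add: power2_eq_square algebra_simps)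
      have e2: "4*R*(R - Re a) > 0" using ra R by simp
      have "(cmod a)^2 < (cmod (2 * of_real R - a))^2"
        using e1 e2 by (simp add: cmod_power2)
      hence "cmod a < cmod (2 * of_real R - a)"
        by (rule power2_less_imp_less) simp
      thus ?thesis using d by (simp add: \<phi>_def a_def[symmetric] norm_divide divide_less_eq)
    qed
    define \<xi> where "\<xi> = z / of_real R"
    have n\<xi>: "cmod \<xi> = 1/2" using False by (simp add: \<xi>_def R_def norm_divide)
    have "cmod (\<phi> \<xi>) \<le> cmod \<xi>"
      by (rule Schwarz_Lemma(1)[OF hol\<phi> \<phi>0]) (use lt1 n\<xi> in auto)
    hence p2: "cmod (\<phi> \<xi>) \<le> 1/2" using n\<xi> by simp
    have zz: "of_real R * \<xi> = z" using R by (simp add: \<xi>_def)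
    define a where "a = g z"
    have d: "2 * of_real R - a \<noteq> 0" using den[of \<xi>] n\<xi> zz by (simp add: a_def)
    have pe: "\<phi> \<xi> = a / (2 * of_real R - a)" by (simp add: \<phi>_def zz a_def)
    have key: "a * (1 + \<phi> \<xi>) = 2 * of_real R * \<phi> \<xi>"
      using d by (simp add: pe field_simps)
    have "cmod (1 + \<phi> \<xi>) \<ge> 1/2"
      using norm_triangle_ineq2[of 1 "- \<phi> \<xi>"] p2 by simp
    moreover have "cmod a * cmod (1 + \<phi> \<xi>) \<le> R"
    proof -
      have "cmod a * cmod (1 + \<phi> \<xi>) = 2 * R * cmod (\<phi> \<xi>)"
        using arg_cong[OF key, of cmod] R by (simp add: norm_mult)
      also have "\<dots> \<le> R" using p2 R by simp
      finally show ?thesis .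
    qed
    ultimately have "cmod a * (1/2) \<le> R"
      using mult_left_mono[of "1/2" "cmod (1 + \<phi> \<xi>)" "cmod a"] by simp
    thus ?thesis by (simp add: a_def R_def)
  qed
  have "g \<xi> = (\<Sum>k\<le>1. (deriv^^k) g 0 / fact k * \<xi> ^ k)" for \<xi>
    by (rule Liouville_polynomial[OF holg, of 0 4]) (use gb in auto)
  hence gl: "g \<xi> = deriv g 0 * \<xi>" for \<xi> using g0z by (simp add: atMost_Suc)
  show ?thesis
  proof (intro exI allI)
    fix x show "F x = exp (deriv g 0 * x)" using eg[of x] gl[of x] by simp
  qed
qed

lemma tail_est:
  fixes x z :: complex and m :: nat
  assumes z: "cmod z < 1"
  shows "cmod ((\<Sum>k<m. x^k / fact k * z^k) - exp (x * z)) \<le> exp (cmod x) - (\<Sum>k<m. cmod x ^ k / fact k)"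
proof -
  define f where "f = (\<lambda>n. (x * z)^n /\<^sub>R fact n)"
  define g where "g = (\<lambda>n. cmod x ^ n /\<^sub>R fact n)"
  have fs: "f sums exp (x * z)" unfolding f_def by (rule exp_converges)
  have gs: "g sums exp (cmod x)" unfolding g_def by (rule exp_converges)
  have fs': "(\<lambda>i. f (i + m)) sums (exp (x * z) - (\<Sum>i<m. f i))"
    by (rule sums_split_initial_segment[OF fs])
  have gs': "(\<lambda>i. g (i + m)) sums (exp (cmod x) - (\<Sum>i<m. g i))"
    by (rule sums_split_initial_segment[OF gs])
  have le: "norm (f (i + m)) \<le> g (i + m)" for i
  proof -
    have "norm (f (i+m)) = (cmod x * cmod z) ^ (i+m) / fact (i+m)"
      by (simp add: f_def norm_mult norm_power divide_inverse_commute)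
    also have "\<dots> \<le> cmod x ^ (i+m) / fact (i+m)"
    proof (intro divide_right_mono power_mono)
      show "cmod x * cmod z \<le> cmod x" using z mult_left_le[of "cmod z" "cmod x"] by simp
    qed auto
    finally show ?thesis by (simp add: g_def divide_inverse mult.commute)
  qed
  have "norm (exp (x * z) - (\<Sum>i<m. f i)) \<le> exp (cmod x) - (\<Sum>i<m. g i)"
    by (rule norm_sums_le[OF fs' gs' le])
  moreover have "(\<Sum>i<m. f i) = (\<Sum>k<m. x^k / fact k * z^k)"
    by (intro sum.cong refl) (simp add: f_def scaleR_conv_of_real power_mult_distrib field_simps)
  moreover have "(\<Sum>i<m. g i) = (\<Sum>k<m. cmod x ^ k / fact k)"
    by (intro sum.cong refl) (simp add: g_def divide_inverse)
  ultimately show ?thesis by (simp add: norm_minus_commute)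
qed

lemma core:
  fixes Lp :: "complex poly \<Rightarrow> complex"
  assumes add: "\<And>p q. Lp (p + q) = Lp p + Lp q"
    and smult: "\<And>a p. Lp (smult a p) = a * Lp p"
    and one: "Lp 1 = 1"
    and nz: "\<And>q \<delta>. \<delta> > 0 \<Longrightarrow> (\<forall>z\<in>ball 0 1. \<delta> \<le> cmod (poly q z)) \<Longrightarrow> Lp q \<noteq> 0"
  shows "Lp p = poly p (Lp [:0,1:])"
proof -
  have const: "Lp [:c:] = c" for c
    using smult[of c 1] one by simp
  have diff: "Lp (p - [:c:]) = Lp p - c" for p c
  proof -
    have "p - [:c:] = p + smult (-1) [:c:]" by simp
    thus ?thesis by (simp only: add smult const) simp
  qed
  have upper: "cmod (Lp p) \<le> M" if h: "\<forall>z\<in>ball 0 1. cmod (poly p z) \<le> M" for p M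
  proof (rule ccontr)
    assume "\<not> cmod (Lp p) \<le> M"
    hence d: "cmod (Lp p) - M > 0" by simp
    have "\<forall>z\<in>ball 0 1. cmod (Lp p) - M \<le> cmod (poly (p - [:Lp p:]) z)"
    proof
      fix z :: complex assume "z \<in> ball 0 1"
      hence "cmod (poly p z) \<le> M" using h by blast
      moreover have "cmod (Lp p) - cmod (poly p z) \<le> cmod (poly p z - Lp p)"
        using norm_triangle_ineq2[of "Lp p" "poly p z"] by (simp add: norm_minus_commute)
      ultimately show "cmod (Lp p) - M \<le> cmod (poly (p - [:Lp p:]) z)" by simp
    qed
    from nz[OF d this] show False by (simp add: diff)
  qed
  have lower: "m \<le> cmod (Lp p)" if h: "\<forall>z\<in>ball 0 1. m \<le> cmod (poly p z)" for p m
  proof (rule ccontr)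
    assume "\<not> m \<le> cmod (Lp p)"
    hence d: "m - cmod (Lp p) > 0" by simp
    have "\<forall>z\<in>ball 0 1. m - cmod (Lp p) \<le> cmod (poly (p - [:Lp p:]) z)"
    proof
      fix z :: complex assume "z \<in> ball 0 1"
      hence "m \<le> cmod (poly p z)" using h by blast
      moreover have "cmod (poly p z) - cmod (Lp p) \<le> cmod (poly p z - Lp p)"
        using norm_triangle_ineq2[of "poly p z" "Lp p"] by simp
      ultimately show "m - cmod (Lp p) \<le> cmod (poly (p - [:Lp p:]) z)" by simp
    qed
    from nz[OF d this] show False by (simp add: diff)
  qed
  define c where "c = (\<lambda>k. Lp (monom 1 k))"
  have c0: "c 0 = 1" using one by (simp add: c_def monom_0 one_pCons)
  have cb: "cmod (c k) \<le> 1" for k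
    unfolding c_def
  proof (rule upper, intro ballI)
    fix z :: complex assume "z \<in> ball 0 1"
    hence "cmod z \<le> 1" by simp
    thus "cmod (poly (monom 1 k) z) \<le> 1" by (simp add: poly_monom norm_power power_le_one)
  qed
  have L0: "Lp 0 = 0" using smult[of 0 0] by simp
  have sumlin: "Lp (\<Sum>k<n. monom (a k) k) = (\<Sum>k<n. a k * c k)" for a n
  proof (induction n)
    case 0 show ?case by (simp add: L0)
  next
    case (Suc n)
    have "monom (a n) n = smult (a n) (monom 1 n)" by (simp add: smult_monom)
    thus ?case using Suc by (simp add: add smult c_def)
  qed
  have polysum: "poly (\<Sum>k<n. monom (a k) k) z = (\<Sum>k<n. a k * z ^ k)" for a :: "nat \<Rightarrow> complex" and n z
    by (simp add: poly_sum poly_monom)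
  define \<Phi> where "\<Phi> = Abs_fps (\<lambda>k. c k / fact k)"
  have rad: "fps_conv_radius \<Phi> = \<infinity>"
    unfolding fps_conv_radius_def
  proof (rule conv_radius_inftyI'')
    fix z :: complex
    have "summable (\<lambda>n. cmod z ^ n /\<^sub>R fact n)" using exp_converges sums_summable by blast
    moreover have "norm (fps_nth \<Phi> n * z ^ n) \<le> cmod z ^ n /\<^sub>R fact n" for n
    proof -
      have "norm (fps_nth \<Phi> n * z ^ n) = cmod (c n) * cmod z ^ n / fact n"
        by (simp add: \<Phi>_def norm_mult norm_divide norm_power)
      also have "\<dots> \<le> 1 * cmod z ^ n / fact n"
        by (intro divide_right_mono mult_right_mono cb) auto
      finally show ?thesis by (simp add: divide_inverse mult.commute)
    qed
    ultimately show "summable (\<lambda>n. fps_nth \<Phi> n * z ^ n)"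
      by (rule summable_comparison_test'[where N=0])
  qed
  define F where "F = eval_fps \<Phi>"
  have holF: "F holomorphic_on UNIV" unfolding F_def by (intro holomorphic_on_eval_fps) (simp add: rad)
  have F0: "F 0 = 1" by (simp add: F_def eval_fps_at_0 \<Phi>_def c0)
  have bounds: "exp (- cmod x) \<le> cmod (F x) \<and> cmod (F x) \<le> exp (cmod x)" for x
  proof -
    define S where "S = (\<lambda>m. \<Sum>k<m. x^k / fact k * c k)"
    define E where "E = (\<lambda>m. exp (cmod x) - (\<Sum>k<m. cmod x ^ k / fact k))"
    have "(\<lambda>n. fps_nth \<Phi> n * x ^ n) sums F x"
      unfolding F_def by (rule sums_eval_fps) (simp add: rad)
    hence "(\<lambda>m. \<Sum>k<m. fps_nth \<Phi> k * x ^ k) \<longlonglongrightarrow> F x" by (simp add: sums_def)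
    moreover have "(\<lambda>m. \<Sum>k<m. fps_nth \<Phi> k * x ^ k) = S"
      by (auto simp: S_def \<Phi>_def intro!: sum.cong)
    ultimately have SF: "S \<longlonglongrightarrow> F x" by simp
    have "(\<lambda>n. cmod x ^ n /\<^sub>R fact n) sums exp (cmod x)" by (rule exp_converges)
    hence "(\<lambda>m. \<Sum>k<m. cmod x ^ k /\<^sub>R fact k) \<longlonglongrightarrow> exp (cmod x)" by (simp add: sums_def)
    hence "(\<lambda>m. \<Sum>k<m. cmod x ^ k / fact k) \<longlonglongrightarrow> exp (cmod x)" by (simp add: divide_inverse mult.commute)
    from tendsto_diff[OF tendsto_const this, of "exp (cmod x)"]
    have E0: "E \<longlonglongrightarrow> 0" unfolding E_def by simp
    have Sb: "exp (- cmod x) - E m \<le> cmod (S m) \<and> cmod (S m) \<le> exp (cmod x) + E m" for m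
    proof -
      define p where "p = (\<Sum>k<m. monom (x^k / fact k) k)"
      have LS: "Lp p = S m" by (simp add: p_def sumlin S_def)
      have pz: "\<bar>cmod (poly p z) - cmod (exp (x * z))\<bar> \<le> E m" if "z \<in> ball 0 1" for z
      proof -
        have "poly p z = (\<Sum>k<m. x^k / fact k * z^k)" by (simp add: p_def polysum)
        hence "cmod (poly p z - exp (x * z)) \<le> E m"
          using tail_est[of z x m] that by (simp add: E_def)
        moreover have "\<bar>cmod (poly p z) - cmod (exp (x * z))\<bar> \<le> cmod (poly p z - exp (x * z))"
          by (rule norm_triangle_ineq3)
        ultimately show ?thesis by linarith
      qed
      have ez: "exp (- cmod x) \<le> cmod (exp (x * z)) \<and> cmod (exp (x * z)) \<le> exp (cmod x)"
        if "z \<in> ball 0 1" for z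
      proof -
        have "\<bar>Re (x * z)\<bar> \<le> cmod (x * z)" by (rule abs_Re_le_cmod)
        also have "\<dots> \<le> cmod x" using that mult_left_le[of "cmod z" "cmod x"] by (simp add: norm_mult)
        finally have h: "\<bar>Re (x * z)\<bar> \<le> cmod x" .
        hence "- cmod x \<le> Re (x * z)" "Re (x * z) \<le> cmod x" by linarith+
        thus ?thesis by (simp only: norm_exp_eq_Re exp_le_cancel_iff)
      qed
      have "cmod (Lp p) \<le> exp (cmod x) + E m"
      proof (rule upper, intro ballI)
        fix z :: complex assume z: "z \<in> ball 0 1"
        from pz[OF z] ez[OF z] show "cmod (poly p z) \<le> exp (cmod x) + E m" unfolding abs_le_iff by linarith
      qed
      moreover have "exp (- cmod x) - E m \<le> cmod (Lp p)"
      proof (rule lower, intro ballI)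
        fix z :: complex assume z: "z \<in> ball 0 1"
        from pz[OF z] ez[OF z] show "exp (- cmod x) - E m \<le> cmod (poly p z)" unfolding abs_le_iff by linarith
      qed
      ultimately show ?thesis by (simp add: LS)
    qed
    have "cmod (F x) \<le> exp (cmod x)"
    proof -
      have "(\<lambda>m. exp (cmod x) + E m) \<longlonglongrightarrow> exp (cmod x) + 0" by (intro tendsto_intros E0)
      thus ?thesis using Sb by (intro tendsto_le[OF _ _ tendsto_norm[OF SF]]) auto
    qed
    moreover have "exp (- cmod x) \<le> cmod (F x)"
    proof -
      have "(\<lambda>m. exp (- cmod x) - E m) \<longlonglongrightarrow> exp (- cmod x) - 0" by (intro tendsto_intros E0)
      thus ?thesis using Sb by (intro tendsto_le[OF _ tendsto_norm[OF SF]]) auto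
    qed
    ultimately show ?thesis by simp
  qed
  have Fnz: "F x \<noteq> 0" for x
    using bounds[of x] by (metis exp_gt_zero norm_zero not_le)
  obtain b where Fb: "\<And>x. F x = exp (b * x)"
    using entire_exp_lin[OF holF F0 Fnz] bounds by blast
  have "\<Phi> = fps_exp b"
  proof (rule eval_fps_eqD)
    show "fps_conv_radius \<Phi> > 0" by (simp add: rad)
    show "fps_conv_radius (fps_exp b) > 0" by simp
    show "\<forall>\<^sub>F z in nhds 0. eval_fps \<Phi> z = eval_fps (fps_exp b) z"
      by (simp add: Fb[unfolded F_def])
  qed
  hence "fps_nth \<Phi> k = fps_nth (fps_exp b) k" for k by simp
  hence ck: "c k = b ^ k" for k by (simp add: \<Phi>_def fps_exp_def)
  have w: "Lp [:0,1:] = b"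
  proof -
    have "[:0,1:] = (monom 1 1 :: complex poly)" by (simp add: monom_Suc monom_0)
    thus ?thesis using ck[of 1] by (simp add: c_def)
  qed
  have "Lp p = Lp (\<Sum>k<Suc (degree p). monom (coeff p k) k)"
    by (simp only: lessThan_Suc_atMost poly_as_sum_of_monoms)
  also have "\<dots> = (\<Sum>k<Suc (degree p). coeff p k * b ^ k)"
    using sumlin[of "coeff p" "Suc (degree p)"] by (simp only: ck)
  also have "\<dots> = poly p b" by (simp add: poly_altdef lessThan_Suc_atMost)
  finally show ?thesis by (simp add: w)
qed

theorem corollary7p2:
  fixes X Y :: "(complex \<Rightarrow> complex) set"
    and N :: "(complex \<Rightarrow> complex) \<Rightarrow> real"
    and T :: "(complex \<Rightarrow> complex) \<Rightarrow> (complex \<Rightarrow> complex)"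
  assumes banach: "banach_subspace_hol X N"
    and X1: "\<And>w f e. w \<in> ball 0 1 \<Longrightarrow> f \<in> X \<Longrightarrow> e > 0 \<Longrightarrow>
               \<exists>d>0. \<forall>g\<in>X. N (\<lambda>z. g z - f z) < d \<longrightarrow> cmod (g w - f w) < e"
    and X2_poly: "\<And>p :: complex poly. restrD (poly p) \<in> X"
    and X2_dense: "\<And>f e. f \<in> X \<Longrightarrow> e > 0 \<Longrightarrow>
               \<exists>p :: complex poly. N (\<lambda>z. f z - restrD (poly p) z) < e"
    and X3: "\<And>f. f \<in> X \<Longrightarrow> (\<lambda>z. z * f z) \<in> X"
    and Y_sub: "Y \<subseteq> X"
    and Y1: "\<And>g. g \<in> X \<Longrightarrow> 0 < (INF z\<in>ball 0 1. cmod (g z)) \<Longrightarrow>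
               bdd_above ((\<lambda>z. cmod (g z)) ` ball 0 1) \<Longrightarrow> g \<in> Y"
    and Y2: "\<And>l. cmod l = 1 \<Longrightarrow> restrD (\<lambda>z. z - l) \<in> Y"
    and T_hol: "\<And>f. f \<in> X \<Longrightarrow> T f holomorphic_on ball 0 1"
    and T_add: "\<And>f g z. f \<in> X \<Longrightarrow> g \<in> X \<Longrightarrow> z \<in> ball 0 1 \<Longrightarrow>
               T (\<lambda>w. f w + g w) z = T f z + T g z"
    and T_scale: "\<And>f c z. f \<in> X \<Longrightarrow> z \<in> ball 0 1 \<Longrightarrow>
               T (\<lambda>w. c * f w) z = c * T f z"
    and T_cont: "\<And>f K e. f \<in> X \<Longrightarrow> compact K \<Longrightarrow> K \<subseteq> ball 0 1 \<Longrightarrow> e > 0 \<Longrightarrow>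
               \<exists>d>0. \<forall>g\<in>X. N (\<lambda>z. g z - f z) < d \<longrightarrow> (\<forall>z\<in>K. cmod (T g z - T f z) < e)"
    and T_nonzero: "\<And>g z. g \<in> Y \<Longrightarrow> z \<in> ball 0 1 \<Longrightarrow> T g z \<noteq> 0"
  shows "\<exists>\<phi> \<psi>. \<phi> holomorphic_on ball 0 1 \<and> \<phi> ` ball 0 1 \<subseteq> ball 0 1 \<and>
            \<psi> holomorphic_on ball 0 1 \<and> (\<forall>z\<in>ball 0 1. \<psi> z \<noteq> 0) \<and>
            (\<forall>f\<in>X. \<forall>z\<in>ball 0 1. T f z = \<psi> z * f (\<phi> z))"
proof -
  define P where "P = (\<lambda>p::complex poly. restrD (poly p))"
  have PX: "P p \<in> X" for p using X2_poly by (simp add: P_def)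
  have Pin: "z \<in> ball 0 1 \<Longrightarrow> P p z = poly p z" for p z by (simp add: P_def restrD_def)
  have Padd: "P (p + q) = (\<lambda>w. P p w + P q w)" for p q by (auto simp: P_def restrD_def)
  have Psmult: "P (smult a p) = (\<lambda>w. a * P p w)" for a p by (auto simp: P_def restrD_def)
  have PY: "P q \<in> Y" if d: "\<delta> > 0" and h: "\<forall>z\<in>ball 0 1. \<delta> \<le> cmod (poly q z)" for q \<delta>
  proof (rule Y1[OF PX])
    have "\<delta> \<le> (INF z\<in>ball 0 1. cmod (P q z))"
    proof (rule cINF_greatest)
      show "ball (0::complex) 1 \<noteq> {}" by (metis centre_in_ball ex_in_conv zero_less_one)
      show "\<And>x. x \<in> ball 0 1 \<Longrightarrow> \<delta> \<le> cmod (P q x)" using h by (simp add: Pin)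
    qed
    thus "0 < (INF z\<in>ball 0 1. cmod (P q z))" using d by linarith
    have "compact (poly q ` cball 0 1)"
      by (intro compact_continuous_image continuous_on_poly continuous_on_id compact_cball)
    then obtain B where B: "\<And>y. y \<in> poly q ` cball 0 1 \<Longrightarrow> norm y \<le> B"
      using compact_imp_bounded bounded_iff by metis
    show "bdd_above ((\<lambda>z. cmod (P q z)) ` ball 0 1)"
    proof (rule bdd_aboveI2)
      fix z :: complex assume "z \<in> ball 0 1"
      thus "cmod (P q z) \<le> B" using B[of "poly q z"] by (simp add: Pin)
    qed
  qed
  define \<psi> where "\<psi> = T (P 1)"
  have \<psi>nz: "\<psi> z \<noteq> 0" if "z \<in> ball 0 1" for z
    unfolding \<psi>_def by (rule T_nonzero[OF PY[of 1 1] that]) auto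
  define \<phi> where "\<phi> = (\<lambda>z. T (P [:0,1:]) z / \<psi> z)"
  have mainP: "T (P p) z = \<psi> z * poly p (\<phi> z)" if z: "z \<in> ball 0 1" for p z
  proof -
    define Lp where "Lp = (\<lambda>p. T (P p) z / \<psi> z)"
    have "Lp p = poly p (Lp [:0,1:])"
    proof (rule core)
      show "Lp (p + q) = Lp p + Lp q" for p q
        by (simp add: Lp_def Padd T_add[OF PX PX z] add_divide_distrib)
      show "Lp (smult a p) = a * Lp p" for a p
        by (simp add: Lp_def Psmult T_scale[OF PX z])
      show "Lp 1 = 1" using \<psi>nz[OF z] by (simp add: Lp_def \<psi>_def)
      show "Lp q \<noteq> 0" if "\<delta> > 0" "\<forall>z\<in>ball 0 1. \<delta> \<le> cmod (poly q z)" for q \<delta>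
        using T_nonzero[OF PY[OF that] z] \<psi>nz[OF z] by (simp add: Lp_def)
    qed
    moreover have "Lp [:0,1:] = \<phi> z" by (simp add: Lp_def \<phi>_def)
    ultimately show ?thesis using \<psi>nz[OF z] by (simp add: Lp_def field_simps)
  qed
  have \<phi>in: "\<phi> z \<in> ball 0 1" if z: "z \<in> ball 0 1" for z
  proof (rule ccontr)
    define w where "w = \<phi> z"
    assume "\<phi> z \<notin> ball 0 1"
    hence w1: "cmod w \<ge> 1" by (simp add: w_def)
    have zero: "T (P [:-w,1:]) z = 0" by (simp add: mainP[OF z] w_def)
    show False
    proof (cases "cmod w = 1")
      case True
      have "restrD (\<lambda>u. u - w) = P [:-w,1:]" by (auto simp: P_def restrD_def)
      hence "P [:-w,1:] \<in> Y" using Y2[OF True] by simp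
      from T_nonzero[OF this z] zero show False by simp
    next
      case False
      hence d: "cmod w - 1 > 0" using w1 by simp
      have "\<forall>u\<in>ball 0 1. cmod w - 1 \<le> cmod (poly [:-w,1:] u)"
      proof
        fix u :: complex assume "u \<in> ball 0 1"
        hence "cmod u < 1" by simp
        moreover have "cmod w - cmod u \<le> cmod (u - w)"
          using norm_triangle_ineq2[of w u] by (simp add: norm_minus_commute)
        ultimately show "cmod w - 1 \<le> cmod (poly [:-w,1:] u)" by simp
      qed
      from T_nonzero[OF PY[OF d this] z] zero show False by simp
    qed
  qed
  have hol\<psi>: "\<psi> holomorphic_on ball 0 1" unfolding \<psi>_def by (rule T_hol[OF PX])
  have hol\<phi>: "\<phi> holomorphic_on ball 0 1"
    unfolding \<phi>_def using \<psi>nz by (intro holomorphic_intros T_hol[OF PX] hol\<psi>) auto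
  have addX: "\<forall>f\<in>X. \<forall>g\<in>X. (\<lambda>z. f z + g z) \<in> X" and scX: "\<forall>f\<in>X. \<forall>c::complex. (\<lambda>z. c * f z) \<in> X"
    and scN: "\<forall>f\<in>X. \<forall>c::complex. N (\<lambda>z. c * f z) = cmod c * N f"
    using banach unfolding banach_subspace_hol_def by blast+
  have Nsym: "N (\<lambda>z. g z - f z) = N (\<lambda>z. f z - g z)" if "f \<in> X" "g \<in> X" for f g
  proof -
    have g': "(\<lambda>z. (-1) * g z) \<in> X" using scX that(2) by blast
    have "(\<lambda>z. f z + (-1) * g z) \<in> X" using addX[rule_format, OF that(1) g'] by simp
    hence m: "(\<lambda>z. f z - g z) \<in> X" by simp
    have "N (\<lambda>z. (-1) * (f z - g z)) = N (\<lambda>z. f z - g z)" using scN[rule_format, OF m, of "-1"] by simp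
    thus ?thesis by simp
  qed
  have final: "T f z = \<psi> z * f (\<phi> z)" if f: "f \<in> X" and z: "z \<in> ball 0 1" for f z
  proof (rule ccontr)
    define w where "w = \<phi> z"
    have w: "w \<in> ball 0 1" using \<phi>in[OF z] by (simp add: w_def)
    assume "T f z \<noteq> \<psi> z * f (\<phi> z)"
    hence d: "cmod (T f z - \<psi> z * f w) > 0" by (simp add: w_def)
    define d where "d = cmod (T f z - \<psi> z * f w)"
    have dp: "d > 0" using d by (simp add: d_def)
    obtain d1 where d1: "d1 > 0" and
      H1: "\<forall>g\<in>X. N (\<lambda>u. g u - f u) < d1 \<longrightarrow> (\<forall>u\<in>{z}. cmod (T g u - T f u) < d/2)"
      using T_cont[OF f compact_sing, of z "d/2"] z dp by auto
    define e2 where "e2 = d / (2 * (cmod (\<psi> z) + 1))"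
    have "2 * (cmod (\<psi> z) + 1) > 0" by (simp add: add_nonneg_pos)
    hence e2: "e2 > 0" using dp unfolding e2_def by (rule divide_pos_pos[rotated])
    obtain d2 where d2: "d2 > 0" and
      H2: "\<forall>g\<in>X. N (\<lambda>u. g u - f u) < d2 \<longrightarrow> cmod (g w - f w) < e2"
      using X1[OF w f e2] by auto
    obtain p where p: "N (\<lambda>u. f u - restrD (poly p) u) < min d1 d2"
      using X2_dense[OF f, of "min d1 d2"] d1 d2 by auto
    have "N (\<lambda>u. P p u - f u) < min d1 d2"
      using p Nsym[OF f PX[of p]] by (simp add: P_def)
    hence A: "cmod (T (P p) z - T f z) < d/2" and B: "cmod (P p w - f w) < e2"
      using H1 H2 PX[of p] by auto
    have C: "T (P p) z = \<psi> z * P p w" using mainP[OF z] Pin[OF w] by (simp add: w_def)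
    have "d = cmod ((T f z - T (P p) z) + \<psi> z * (P p w - f w))"
      by (simp add: d_def C algebra_simps)
    also have "\<dots> \<le> cmod (T (P p) z - T f z) + cmod (\<psi> z) * cmod (P p w - f w)"
      using norm_triangle_ineq[of "T f z - T (P p) z" "\<psi> z * (P p w - f w)"]
      by (simp add: norm_mult norm_minus_commute)
    also have "\<dots> \<le> d/2 + cmod (\<psi> z) * e2"
      using A B by (intro add_mono mult_left_mono) auto
    also have "cmod (\<psi> z) * e2 < d/2"
    proof -
      have "cmod (\<psi> z) * e2 = d/2 * (cmod (\<psi> z) / (cmod (\<psi> z) + 1))"
        by (simp add: e2_def field_simps)
      also have "\<dots> < d/2 * 1"
      proof (intro mult_strict_left_mono)
        have "cmod (\<psi> z) + 1 > 0" by (simp add: add_nonneg_pos)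
        thus "cmod (\<psi> z) / (cmod (\<psi> z) + 1) < 1" by (simp add: divide_less_eq)
      qed (use dp in simp)
      finally show ?thesis by simp
    qed
    finally show False by simp
  qed
  show ?thesis
    by (intro exI[of _ \<phi>] exI[of _ \<psi>] conjI hol\<phi> hol\<psi> ballI image_subsetI \<phi>in \<psi>nz final)
qed

end
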